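(* Let $f\in C^3([0,1])$ be such that $f,f',f'',f'''\geq 0$ on $[0,1]$. Then for every integer $N\geq 1$, $$0\leq \sum_{i=0}^{N}f\left(\frac{i}{N}\right)-N\int_0^1 f(t)\,dt-\frac{f(0)+f(1)}{2}\leq \frac{f'(1)-f'(0)}{4N}.$$ *)

theory Defs
  imports "HOL-Analysis.Analysis"
begin

end

theory Submission
  imports Defs
begin

lemma interval_est:
  fixes f f1 f2 G :: "real \<Rightarrow> real" and a b :: real
  assumes df: "\<And>x. 0<x \<Longrightarrow> x<1 \<Longrightarrow> (f has_real_derivative f1 x) (at x)"
  and dG: "\<And>x. 0<x \<Longrightarrow> x<1 \<Longrightarrow> (G has_real_derivative f x) (at x)"
  and df1: "\<And>x. 0<x \<Longrightarrow> x<1 \<Longrightarrow> (f1 has_real_derivative f2 x) (at x)"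
  and cf: "continuous_on {0..1} f" and cf1: "continuous_on {0..1} f1" and cG: "continuous_on {0..1} G"
  and f2nn: "\<And>x. 0<x \<Longrightarrow> x<1 \<Longrightarrow> f2 x \<ge> 0"
  and mono: "\<And>x y. 0\<le>x \<Longrightarrow> x\<le>y \<Longrightarrow> y\<le>1 \<Longrightarrow> f1 x \<le> f1 y"
  and ab: "0 \<le> a" "a \<le> b" "b \<le> 1"
  shows "0 \<le> (b-a)/2*(f a + f b) - (G b - G a)"
    and "(b-a)/2*(f a + f b) - (G b - G a) \<le> ((b-a)/2)^2/2*(f1 b - f1 a)"
proof -
  define m where "m = (a+b)/2"
  define r where "r = (b-a)/2"
  have r0: "0 \<le> r" using ab by (simp add: r_def)
  have am: "a = m - r" "b = m + r" by (simp_all add: m_def r_def field_simps)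
  have sub1: "(\<lambda>s. m+s) ` {0..r} \<subseteq> {0..1}" using ab by (auto simp: m_def r_def field_simps)
  have sub2: "(\<lambda>s. m-s) ` {0..r} \<subseteq> {0..1}" using ab by (auto simp: m_def r_def field_simps)
  have cp: "continuous_on {0..r} (\<lambda>s. m+s)" "continuous_on {0..r} (\<lambda>s. m-s)"
    by (intro continuous_intros)+
  note cc = continuous_on_compose2[OF cf cp(1) sub1] continuous_on_compose2[OF cf cp(2) sub2]
    continuous_on_compose2[OF cf1 cp(1) sub1] continuous_on_compose2[OF cf1 cp(2) sub2]
    continuous_on_compose2[OF cG cp(1) sub1] continuous_on_compose2[OF cG cp(2) sub2]
  have int: "0 < m+s" "m+s < 1" "0 < m-s" "m-s < 1" if "0<s" "s<r" for s
    using that ab by (auto simp: m_def r_def field_simps)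
  have dp: "((\<lambda>s. g (m+s)) has_real_derivative g' (m+s)) (at s)"
    if "\<And>x. 0<x \<Longrightarrow> x<1 \<Longrightarrow> (g has_real_derivative g' x) (at x)" "0<s" "s<r" for g g' s
  proof -
    have "((\<lambda>x. m + x) has_real_derivative 1) (at s)" by (auto intro!: derivative_eq_intros)
    from DERIV_chain2[where g="\<lambda>s. m+s", OF that(1)[OF int(1,2)[OF that(2,3)]] this] show ?thesis by simp
  qed
  have dm: "((\<lambda>s. g (m-s)) has_real_derivative - g' (m-s)) (at s)"
    if "\<And>x. 0<x \<Longrightarrow> x<1 \<Longrightarrow> (g has_real_derivative g' x) (at x)" "0<s" "s<r" for g g' s
  proof -
    have "((\<lambda>x. m - x) has_real_derivative -1) (at s)" by (auto intro!: derivative_eq_intros)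
    from DERIV_chain2[where g="\<lambda>s. m-s", OF that(1)[OF int(3,4)[OF that(2,3)]] this] show ?thesis by simp
  qed
  define Q where "Q s = s*(f(m-s)+f(m+s)) - (G(m+s) - G(m-s))" for s
  define P where "P s = G(m+s) - G(m-s) - s*(f(m-s)+f(m+s)) + s^2/2*(f1(m+s) - f1(m-s))" for s
  have "Q 0 \<le> Q r"
  proof (rule DERIV_nonneg_imp_increasing_open[OF r0])
    fix s assume s: "0 < s" "s < r"
    have "(Q has_real_derivative s*(f1(m+s) - f1(m-s))) (at s)"
      unfolding Q_def
      using dp[OF df s] dm[OF df s] dp[OF dG s] dm[OF dG s]
      by (auto intro!: derivative_eq_intros simp: algebra_simps)
    moreover have "f1(m-s) \<le> f1(m+s)" using mono[of "m-s" "m+s"] int[OF s] s by auto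
    ultimately show "\<exists>y. (Q has_real_derivative y) (at s) \<and> 0 \<le> y" using s by auto
  next
    show "continuous_on {0..r} Q" unfolding Q_def using cc by (intro continuous_intros) auto
  qed
  then show "0 \<le> (b-a)/2*(f a + f b) - (G b - G a)"
    by (simp add: Q_def am r_def[symmetric] algebra_simps)
  have "P 0 \<le> P r"
  proof (rule DERIV_nonneg_imp_increasing_open[OF r0])
    fix s assume s: "0 < s" "s < r"
    have "(P has_real_derivative s^2/2*(f2(m+s) + f2(m-s))) (at s)"
      unfolding P_def
      using dp[OF df s] dm[OF df s] dp[OF dG s] dm[OF dG s] dp[OF df1 s] dm[OF df1 s]
      apply (auto intro!: derivative_eq_intros) by (simp add: field_simps power2_eq_square)
    moreover have "0 \<le> f2(m+s) + f2(m-s)" using f2nn int[OF s] by (simp add: add_nonneg_nonneg)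
    ultimately show "\<exists>y. (P has_real_derivative y) (at s) \<and> 0 \<le> y" using s by auto
  next
    show "continuous_on {0..r} P" unfolding P_def using cc by (intro continuous_intros) auto
  qed
  then show "(b-a)/2*(f a + f b) - (G b - G a) \<le> ((b-a)/2)^2/2*(f1 b - f1 a)"
    by (simp add: P_def am r_def[symmetric] algebra_simps) (simp add: field_simps)
qed

theorem lemma2p2:
  fixes f f1 f2 f3 :: "real \<Rightarrow> real" and N :: nat
  assumes d1: "\<And>x. x \<in> {0..1} \<Longrightarrow> (f has_real_derivative f1 x) (at x within {0..1})"
      and d2: "\<And>x. x \<in> {0..1} \<Longrightarrow> (f1 has_real_derivative f2 x) (at x within {0..1})"
      and d3: "\<And>x. x \<in> {0..1} \<Longrightarrow> (f2 has_real_derivative f3 x) (at x within {0..1})"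
      and c3: "continuous_on {0..1} f3"
      and nn: "\<And>x. x \<in> {0..1} \<Longrightarrow> f x \<ge> 0 \<and> f1 x \<ge> 0 \<and> f2 x \<ge> 0 \<and> f3 x \<ge> 0"
      and N: "N \<ge> 1"
  shows "0 \<le> (\<Sum>i=0..N. f (real i / real N)) - real N * integral {0..1} f - (f 0 + f 1) / 2
     \<and> (\<Sum>i=0..N. f (real i / real N)) - real N * integral {0..1} f - (f 0 + f 1) / 2
         \<le> (f1 1 - f1 0) / (4 * real N)"
proof -
  define G where "G x = integral {0..x} f" for x
  have cf: "continuous_on {0..1} f" by (rule DERIV_continuous_on[OF d1])
  have cf1: "continuous_on {0..1} f1" by (rule DERIV_continuous_on[OF d2])
  have dGw: "(G has_real_derivative f x) (at x within {0..1})" if "x \<in> {0..1}" for x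
    unfolding G_def[abs_def] by (rule integral_has_real_derivative[OF cf that])
  have cG: "continuous_on {0..1} G" by (rule DERIV_continuous_on[OF dGw])
  have df: "(f has_real_derivative f1 x) (at x)" if "0<x" "x<1" for x
    using d1[of x] that by (simp add: at_within_Icc_at)
  have df1: "(f1 has_real_derivative f2 x) (at x)" if "0<x" "x<1" for x
    using d2[of x] that by (simp add: at_within_Icc_at)
  have dG: "(G has_real_derivative f x) (at x)" if "0<x" "x<1" for x
    using dGw[of x] that by (simp add: at_within_Icc_at)
  have f2nn: "f2 x \<ge> 0" if "0<x" "x<1" for x using nn[of x] that by simp
  have mono: "f1 x \<le> f1 y" if "0\<le>x" "x\<le>y" "y\<le>1" for x y
  proof (rule DERIV_nonneg_imp_increasing_open[OF that(2)])
    fix t assume "x < t" "t < y"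
    then show "\<exists>z. (f1 has_real_derivative z) (at t) \<and> 0 \<le> z"
      using df1[of t] f2nn[of t] that by auto
  next
    show "continuous_on {x..y} f1" by (rule continuous_on_subset[OF cf1]) (use that in auto)
  qed
  have est: "0 \<le> (b-a)/2*(f a + f b) - (G b - G a) \<and> (b-a)/2*(f a + f b) - (G b - G a) \<le> ((b-a)/2)^2/2*(f1 b - f1 a)"
    if "0 \<le> a" "a \<le> b" "b \<le> 1" for a b
  proof (rule conjI)
    show "0 \<le> (b-a)/2*(f a + f b) - (G b - G a)"
      by (rule interval_est(1)[of f f1 G f2]) (use df dG df1 cf cf1 cG f2nn mono that in auto)
    show "(b-a)/2*(f a + f b) - (G b - G a) \<le> ((b-a)/2)^2/2*(f1 b - f1 a)"
      by (rule interval_est(2)[of f f1 G f2]) (use df dG df1 cf cf1 cG f2nn mono that in auto)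
  qed
  define F where "F i = f (real i / real N)" for i
  define H where "H i = G (real i / real N)" for i
  define D where "D i = f1 (real i / real N)" for i
  define e where "e i = (1/(2*real N))*(F i + F (Suc i)) - (H (Suc i) - H i)" for i
  have Npos: "real N > 0" using N by simp
  have ei: "0 \<le> e i \<and> e i \<le> (1/(2*real N))^2/2 * (D (Suc i) - D i)" if "i < N" for i
  proof -
    have a: "0 \<le> real i / real N" "real i / real N \<le> real (Suc i) / real N"
      "real (Suc i) / real N \<le> 1" using that Npos by (auto simp: divide_right_mono)
    have w: "real (Suc i) / real N - real i / real N = 1 / real N" using Npos by (simp add: field_simps)
    have w2: "(1/real N)/2 = 1/(2*real N)" by simp
    show ?thesis using est[OF a] unfolding w w2 e_def F_def H_def D_def by simp
  qed
  have sumF: "(\<Sum>i=0..N. F i) = (\<Sum>i<N. F i) + F N"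
    by (simp add: atLeast0AtMost lessThan_Suc_atMost[symmetric])
  have sumF2: "(\<Sum>i=0..N. F i) = F 0 + (\<Sum>i<N. F (Suc i))"
    by (simp only: atLeast0AtMost lessThan_Suc_atMost[symmetric] sum.lessThan_Suc_shift)
  have F01: "F 0 = f 0" "F N = f 1" using Npos by (auto simp: F_def)
  have Hint: "H N - H 0 = integral {0..1} f" using Npos by (simp add: H_def G_def)
  have sume: "(\<Sum>i<N. e i) = (1/(2*real N))*((\<Sum>i<N. F i) + (\<Sum>i<N. F (Suc i))) - (H N - H 0)"
    unfolding e_def sum_subtractf sum_distrib_left[symmetric] sum.distrib
    using sum_lessThan_telescope[of H N] by (simp only: sum_subtractf)
  have Q: "(\<Sum>i=0..N. f (real i / real N)) - real N * integral {0..1} f - (f 0 + f 1) / 2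
     = real N * (\<Sum>i<N. e i)"
  proof -
    have "(\<Sum>i=0..N. f (real i / real N)) = (\<Sum>i=0..N. F i)" by (simp add: F_def)
    moreover have hB: "(\<Sum>i<N. F (Suc i)) = f 1 + sum F {..<N} - f 0" using sumF sumF2 F01 by simp
    ultimately show ?thesis unfolding sume Hint[symmetric] using sumF F01 Npos
      by (simp add: hB field_simps)
  qed
  have low: "0 \<le> (\<Sum>i<N. e i)" using ei by (intro sum_nonneg) auto
  have "(\<Sum>i<N. e i) \<le> (\<Sum>i<N. (1/(2*real N))^2/2 * (D (Suc i) - D i))"
    using ei by (intro sum_mono) auto
  also have "\<dots> = (1/(2*real N))^2/2 * (f1 1 - f1 0)"
    using Npos by (simp only: sum_distrib_left[symmetric] sum_lessThan_telescope[of D N]) (simp add: D_def)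
  finally have up: "(\<Sum>i<N. e i) \<le> (1/(2*real N))^2/2 * (f1 1 - f1 0)" .
  have m01: "f1 0 \<le> f1 1" using mono[of 0 1] by simp
  have "real N * (\<Sum>i<N. e i) \<le> real N * ((1/(2*real N))^2/2 * (f1 1 - f1 0))"
    using up Npos by (simp add: mult_left_mono)
  also have "\<dots> = (f1 1 - f1 0) / (8 * real N)" using Npos by (simp add: field_simps power2_eq_square)
  also have "\<dots> \<le> (f1 1 - f1 0) / (4 * real N)" using m01 Npos by (simp add: frac_le)
  finally show ?thesis unfolding Q using low Npos by simp
qed

end
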